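(* The number of ordinary $k\times k$ permutation matrices is $k!-o(k!)$ as $k\to\infty$; i.e. almost all $k\times k$ permutation matrices are ordinary.
   Context: Say a permutation matrix $P$ reduces to a class if some matrix obtainable from $P$ by a sequence of vertical/horizontal reflections and $90$-degree rotations lies in that class. A permutation matrix is ordinary if it reduces to none of the following four classes. "Splitting the rows into contiguous nonempty sets $R_1,R_2,\dots$" means the rows of $R_1$ precede those of $R_2$, etc., and similarly for columns. Class 1: permutation matrices $P$ whose rows split into contiguous nonempty $R_1,R_2$ and columns into contiguous nonempty $C_1,C_2$ such that $P$ has ones in $R_1\times C_1$ and in $R_2\times C_2$, and all ones of $P$ lie in these two submatrices except for at most $2$ ones in $R_1\times C_2$; if there are two ones in $R_1\times C_2$, they are in adjacent rows. Class 2: permutation matrices $P$ whose rows split into contiguous nonempty $R_1,R_2,R_3$ and columns into contiguous nonempty $C_1,C_2$ such that $P$ has ones in $R_1\times C_2$ and in $R_3\times C_2$, at least two ones in $R_2\times C_1$, and all ones of $P$ lie in these three submatrices except for at most $2$ ones in $R_2\times C_2$; if there are two ones in $R_2\times C_2$, they are in adjacent rows. Class 3: permutation matrices obtained from some element $X$ of Class 2 (with its sets $R_1,R_2,R_3,C_1,C_2$) by taking the row $r$ of $X$ containing the rightmost one in $R_2\times C_1$, deleting $r$ from its position, and inserting it above the first row of $X$. Class 4: permutation matrices $P$ whose rows split into contiguous nonempty $R_1,R_2,R_3$ and columns into contiguous nonempty $C_1,C_2,C_3$ such that $P$ has ones in each of $R_1\times C_2$, $R_2\times C_1$, $R_2\times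 C_3$, $R_3\times C_2$, and only in these submatrices. *)

theory Defs
  imports Main "HOL-Library.Landau_Symbols"
begin

text \<open>A k x k 0/1 matrix is represented by the set of positions (row, column) of its ones,
rows and columns indexed by 0..k-1, row 0 being the top row and column 0 the leftmost.\<close>

definition perm_mat :: "nat \<Rightarrow> (nat \<times> nat) set \<Rightarrow> bool" where
  "perm_mat k P \<longleftrightarrow> P \<subseteq> {..<k} \<times> {..<k}
     \<and> (\<forall>i<k. \<exists>!j. (i, j) \<in> P) \<and> (\<forall>j<k. \<exists>!i. (i, j) \<in> P)"

definition vrefl :: "nat \<Rightarrow> (nat \<times> nat) set \<Rightarrow> (nat \<times> nat) set" where
  "vrefl k P = (\<lambda>(i, j). (i, k - 1 - j)) ` P"

definition hrefl :: "nat \<Rightarrow> (nat \<times> nat) set \<Rightarrow> (nat \<times> nat) set" where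
  "hrefl k P = (\<lambda>(i, j). (k - 1 - i, j)) ` P"

definition rot90 :: "nat \<Rightarrow> (nat \<times> nat) set \<Rightarrow> (nat \<times> nat) set" where
  "rot90 k P = (\<lambda>(i, j). (j, k - 1 - i)) ` P"

inductive sym_reach :: "nat \<Rightarrow> (nat \<times> nat) set \<Rightarrow> (nat \<times> nat) set \<Rightarrow> bool"
  for k :: nat and P :: "(nat \<times> nat) set" where
  refl: "sym_reach k P P"
| vstep: "sym_reach k P Q \<Longrightarrow> sym_reach k P (vrefl k Q)"
| hstep: "sym_reach k P Q \<Longrightarrow> sym_reach k P (hrefl k Q)"
| rstep: "sym_reach k P Q \<Longrightarrow> sym_reach k P (rot90 k Q)"

definition few_adjacent :: "(nat \<times> nat) set \<Rightarrow> (nat \<times> nat) set \<Rightarrow> bool" where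
  "few_adjacent P S \<longleftrightarrow> card (P \<inter> S) \<le> 2 \<and>
     (card (P \<inter> S) = 2 \<longrightarrow>
        (\<forall>x\<in>P \<inter> S. \<forall>y\<in>P \<inter> S. x \<noteq> y \<longrightarrow> fst x = fst y + 1 \<or> fst y = fst x + 1))"

text \<open>Class 1: rows R1 = {0..<a}, R2 = {a..<k}; columns C1 = {0..<b}, C2 = {b..<k}.\<close>

definition class1 :: "nat \<Rightarrow> (nat \<times> nat) set \<Rightarrow> bool" where
  "class1 k P \<longleftrightarrow> perm_mat k P \<and> (\<exists>a b. 0 < a \<and> a < k \<and> 0 < b \<and> b < k \<and>
     P \<inter> ({0..<a} \<times> {0..<b}) \<noteq> {} \<and>
     P \<inter> ({a..<k} \<times> {b..<k}) \<noteq> {} \<and>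
     P \<subseteq> ({0..<a} \<times> {0..<b}) \<union> ({a..<k} \<times> {b..<k}) \<union> ({0..<a} \<times> {b..<k}) \<and>
     few_adjacent P ({0..<a} \<times> {b..<k}))"

text \<open>Class 2 with respect to a given splitting: rows R1 = {0..<a}, R2 = {a..<b},
  R3 = {b..<k}; columns C1 = {0..<c}, C2 = {c..<k}.\<close>

definition class2_split :: "nat \<Rightarrow> (nat \<times> nat) set \<Rightarrow> nat \<Rightarrow> nat \<Rightarrow> nat \<Rightarrow> bool" where
  "class2_split k P a b c \<longleftrightarrow> perm_mat k P \<and>
     0 < a \<and> a < b \<and> b < k \<and> 0 < c \<and> c < k \<and>
     P \<inter> ({0..<a} \<times> {c..<k}) \<noteq> {} \<and>
     P \<inter> ({b..<k} \<times> {c..<k}) \<noteq> {} \<and>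
     card (P \<inter> ({a..<b} \<times> {0..<c})) \<ge> 2 \<and>
     P \<subseteq> ({0..<a} \<times> {c..<k}) \<union> ({b..<k} \<times> {c..<k}) \<union> ({a..<b} \<times> {0..<c})
          \<union> ({a..<b} \<times> {c..<k}) \<and>
     few_adjacent P ({a..<b} \<times> {c..<k})"

definition class2 :: "nat \<Rightarrow> (nat \<times> nat) set \<Rightarrow> bool" where
  "class2 k P \<longleftrightarrow> (\<exists>a b c. class2_split k P a b c)"

definition move_row_top :: "nat \<Rightarrow> (nat \<times> nat) set \<Rightarrow> (nat \<times> nat) set" where
  "move_row_top r P = (\<lambda>(i, j). if i = r then (0, j) else if i < r then (i + 1, j) else (i, j)) ` P"

text \<open>Class 3: r is the row of X containing the rightmost one in R2 x C1.\<close>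

definition class3 :: "nat \<Rightarrow> (nat \<times> nat) set \<Rightarrow> bool" where
  "class3 k P \<longleftrightarrow> (\<exists>X a b c r j. class2_split k X a b c \<and>
     (r, j) \<in> X \<and> a \<le> r \<and> r < b \<and> j < c \<and>
     (\<forall>(r', j') \<in> X. a \<le> r' \<and> r' < b \<and> j' < c \<longrightarrow> j' \<le> j) \<and>
     P = move_row_top r X)"

definition class4 :: "nat \<Rightarrow> (nat \<times> nat) set \<Rightarrow> bool" where
  "class4 k P \<longleftrightarrow> perm_mat k P \<and> (\<exists>a b c d.
     0 < a \<and> a < b \<and> b < k \<and> 0 < c \<and> c < d \<and> d < k \<and>
     P \<inter> ({0..<a} \<times> {c..<d}) \<noteq> {} \<and>
     P \<inter> ({a..<b} \<times> {0..<c}) \<noteq> {} \<and>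
     P \<inter> ({a..<b} \<times> {d..<k}) \<noteq> {} \<and>
     P \<inter> ({b..<k} \<times> {c..<d}) \<noteq> {} \<and>
     P \<subseteq> ({0..<a} \<times> {c..<d}) \<union> ({a..<b} \<times> {0..<c}) \<union> ({a..<b} \<times> {d..<k})
          \<union> ({b..<k} \<times> {c..<d}))"

definition reduces_to :: "nat \<Rightarrow> (nat \<times> nat) set \<Rightarrow> (nat \<Rightarrow> (nat \<times> nat) set \<Rightarrow> bool) \<Rightarrow> bool" where
  "reduces_to k P C \<longleftrightarrow> (\<exists>Q. sym_reach k P Q \<and> C k Q)"

definition ordinary :: "nat \<Rightarrow> (nat \<times> nat) set \<Rightarrow> bool" where
  "ordinary k P \<longleftrightarrow> perm_mat k P \<and>
     \<not> reduces_to k P class1 \<and> \<not> reduces_to k P class2 \<and>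
     \<not> reduces_to k P class3 \<and> \<not> reduces_to k P class4"

end

theory Submission
  imports Defs "HOL-Combinatorics.Permutations"
begin

definition graph :: "nat \<Rightarrow> (nat \<Rightarrow> nat) \<Rightarrow> (nat \<times> nat) set" where
  "graph k s = (\<lambda>i. (i, s i)) ` {..<k}"

lemma pmD1: "perm_mat k P \<Longrightarrow> P \<subseteq> {..<k} \<times> {..<k}"
  unfolding perm_mat_def by (erule conjunct1)

lemma pmD2: "perm_mat k P \<Longrightarrow> i < k \<Longrightarrow> \<exists>!j. (i, j) \<in> P"
  unfolding perm_mat_def by (drule conjunct2, drule conjunct1) (erule allE, erule mp)

lemma pmD3: "perm_mat k P \<Longrightarrow> j < k \<Longrightarrow> \<exists>!i. (i, j) \<in> P"
  unfolding perm_mat_def by (drule conjunct2, drule conjunct2) (erule allE, erule mp)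

lemma ex1_eq: "\<exists>!x. Q x \<Longrightarrow> Q a \<Longrightarrow> Q b \<Longrightarrow> a = b"
  by blast

lemma graph_perm: assumes "s permutes {..<k}" shows "perm_mat k (graph k s)"
proof -
  have sk: "\<And>i. i < k \<Longrightarrow> s i < k" using assms permutes_in_image by fastforce
  have sur: "\<And>j. j < k \<Longrightarrow> \<exists>i<k. s i = j" using assms by (metis lessThan_iff permutes_image imageE)
  have inj: "\<And>x y. s x = s y \<Longrightarrow> x = y" using assms permutes_inj injD by metis
  have m: "(i, j) \<in> graph k s \<longleftrightarrow> i < k \<and> j = s i" for i j unfolding graph_def by auto
  show ?thesis unfolding perm_mat_def
  proof (intro conjI allI impI)
    show "graph k s \<subseteq> {..<k} \<times> {..<k}" using sk m by auto
    fix i assume "i < k" then show "\<exists>!j. (i, j) \<in> graph k s" using m by auto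
  next
    fix j assume "j < k" then obtain i where "i < k" "s i = j" using sur by blast
    then show "\<exists>!i. (i, j) \<in> graph k s" using m inj by metis
  qed
qed

lemma perm_graph: assumes "perm_mat k P" shows "\<exists>s. s permutes {..<k} \<and> P = graph k s"
proof -
  define s where "s i = (if i < k then (THE j. (i, j) \<in> P) else i)" for i
  have P1: "(i, s i) \<in> P" if "i < k" for i
  proof -
    have "\<exists>!j. (i, j) \<in> P" using pmD2[OF assms that] .
    then have "(i, THE j. (i, j) \<in> P) \<in> P" by (rule theI')
    then show ?thesis using that by (simp add: s_def)
  qed
  have sub: "P \<subseteq> {..<k} \<times> {..<k}" using pmD1[OF assms] .
  have P2: "\<And>i j. (i, j) \<in> P \<Longrightarrow> j = s i"
  proof -
    fix i j assume h: "(i, j) \<in> P"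
    then have "i < k" using sub by auto
    then have u: "\<exists>!j. (i, j) \<in> P" using pmD2[OF assms] by blast
    show "j = s i" using ex1_eq[OF u h P1[OF \<open>i < k\<close>]] .
  qed
  have eq: "P = graph k s"
  proof
    show "P \<subseteq> graph k s" unfolding graph_def using P2 sub by force
    show "graph k s \<subseteq> P" unfolding graph_def using P1 by auto
  qed
  have sk: "\<And>i. i < k \<Longrightarrow> s i < k" using P1 sub by blast
  have inj: "inj_on s {..<k}"
  proof (rule inj_onI)
    fix x y assume "x \<in> {..<k}" "y \<in> {..<k}" "s x = s y"
    then have a: "(x, s x) \<in> P" "(y, s x) \<in> P" "s x < k" using P1[of x] P1[of y] sk[of x] by simp_all
    have u: "\<exists>!i. (i, s x) \<in> P" using pmD3[OF assms a(3)] .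
    show "x = y" using ex1_eq[OF u a(1,2)] .
  qed
  have "s ` {..<k} = {..<k}"
    using inj sk by (intro endo_inj_surj) auto
  then have "bij_betw s {..<k} {..<k}" using inj bij_betw_def by blast
  then have "s permutes {..<k}" by (rule bij_imp_permutes) (simp add: s_def)
  then show ?thesis using eq by blast
qed

lemma graph_inj: "inj_on (graph k) {s. s permutes {..<k}}"
proof (rule inj_onI)
  fix s t assume hs: "s \<in> {s. s permutes {..<k}}" and ht: "t \<in> {s. s permutes {..<k}}"
    and e: "graph k s = graph k t"
  show "s = t"
  proof
    fix i show "s i = t i"
    proof (cases "i < k")
      case True
      then have "(i, s i) \<in> graph k t" using e unfolding graph_def by auto
      then show ?thesis unfolding graph_def by auto
    next
      case False
      then show ?thesis using hs ht by (simp add: permutes_def)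
    qed
  qed
qed

lemma perm_set_eq: "{P. perm_mat k P} = graph k ` {s. s permutes {..<k}}"
  using graph_perm perm_graph by blast

lemma card_perm: "card {P. perm_mat k P} = fact k"
  unfolding perm_set_eq by (simp add: card_image[OF graph_inj] card_permutations)

lemma finite_perm: "finite {P. perm_mat k P}"
  unfolding perm_set_eq by (simp add: finite_permutations)

lemma exists_perm_map:
  assumes "finite U" "C \<subseteq> U" "D \<subseteq> U" "card C = card D"
  shows "\<exists>t. t permutes U \<and> t ` C = D"
proof -
  have fC: "finite C" "finite D" using assms finite_subset by auto
  obtain f where f: "bij_betw f C D" using finite_same_card_bij[OF fC assms(4)] by blast
  have "card (U - C) = card (U - D)" using assms fC by (simp add: card_Diff_subset)
  then obtain g where g: "bij_betw g (U - C) (U - D)"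
    using finite_same_card_bij assms(1) by blast
  define t where "t x = (if x \<in> C then f x else if x \<in> U then g x else x)" for x
  have t1: "bij_betw t C D" using f by (rule bij_betw_cong[THEN iffD1, rotated]) (simp add: t_def)
  have t2: "bij_betw t (U - C) (U - D)" using g by (rule bij_betw_cong[THEN iffD1, rotated]) (simp add: t_def)
  have "bij_betw t (C \<union> (U - C)) (D \<union> (U - D))" using bij_betw_combine[OF t1 t2] by blast
  moreover have "C \<union> (U - C) = U" "D \<union> (U - D) = U" using assms by auto
  ultimately have "bij_betw t U U" by simp
  then have "t permutes U" by (rule bij_imp_permutes) (use assms(2) in \<open>auto simp: t_def\<close>)
  moreover have "t ` C = D" using t1 bij_betw_imp_surj_on by blast
  ultimately show ?thesis by blast
qed

definition XS :: "nat set \<Rightarrow> nat set \<Rightarrow> nat set \<Rightarrow> (nat \<Rightarrow> nat) set" where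
  "XS U B C = {s. s permutes U \<and> {i\<in>U. s i \<in> B} = C}"

lemma XS_le:
  assumes "finite U" "C \<subseteq> U" "D \<subseteq> U" "card C = card D"
  shows "card (XS U B C) \<le> card (XS U B D)"
proof -
  obtain t where t: "t permutes U" "t ` D = C" using exists_perm_map[OF assms(1,3,2) assms(4)[symmetric]] by blast
  have tin: "\<And>i. i \<in> U \<Longrightarrow> t i \<in> C \<longleftrightarrow> i \<in> D"
  proof -
    fix i assume i: "i \<in> U"
    show "t i \<in> C \<longleftrightarrow> i \<in> D"
    proof
      assume "t i \<in> C" then have "t i \<in> t ` D" by (simp add: t(2))
      then obtain j where "j \<in> D" "t j = t i" by (metis imageE)
      then show "i \<in> D" using permutes_inj[OF t(1)] by (metis injD)
    next
      assume "i \<in> D" then show "t i \<in> C" using t(2) by blast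
    qed
  qed
  have tU: "\<And>i. i \<in> U \<Longrightarrow> t i \<in> U" by (simp add: permutes_in_image[OF t(1)])
  have "inj_on (\<lambda>s. s \<circ> t) (XS U B C)"
  proof (rule inj_onI)
    fix s s' assume "s \<circ> t = s' \<circ> t"
    show "s = s'"
    proof
      fix y
      obtain z where "t z = y" using permutes_surj[OF t(1)] by (metis surjD)
      then show "s y = s' y" using \<open>s \<circ> t = s' \<circ> t\<close> by (metis comp_apply)
    qed
  qed
  moreover have "(\<lambda>s. s \<circ> t) ` XS U B C \<subseteq> XS U B D"
  proof
    fix x assume "x \<in> (\<lambda>s. s \<circ> t) ` XS U B C"
    then obtain s where s: "s permutes U" "{i\<in>U. s i \<in> B} = C" and x: "x = s \<circ> t"
      unfolding XS_def by blast
    have "x permutes U" unfolding x by (rule permutes_compose[OF t(1) s(1)])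
    moreover have "{i\<in>U. x i \<in> B} = D"
    proof -
      have "{i\<in>U. x i \<in> B} = {i\<in>U. t i \<in> C}" unfolding s(2)[symmetric] x using tU by auto
      also have "\<dots> = D" by (rule set_eqI) (use tin assms(3) in blast)
      finally show ?thesis .
    qed
    ultimately show "x \<in> XS U B D" unfolding XS_def by blast
  qed
  moreover have "finite (XS U B D)" using finite_permutations[OF assms(1)]
    unfolding XS_def by (rule finite_subset[rotated]) auto
  ultimately show ?thesis using card_inj_on_le by blast
qed

lemma XS_eq:
  assumes "finite U" "C \<subseteq> U" "D \<subseteq> U" "card C = card D"
  shows "card (XS U B C) = card (XS U B D)"
  using XS_le[where B=B, OF assms] XS_le[where B=B, OF assms(1,3,2) assms(4)[symmetric]] by simp

lemma card_pre:
  assumes "s permutes U" "B \<subseteq> U"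
  shows "card {i\<in>U. s i \<in> B} = card B"
proof -
  have "s ` {i\<in>U. s i \<in> B} = B"
  proof
    show "s ` {i\<in>U. s i \<in> B} \<subseteq> B" by auto
    show "B \<subseteq> s ` {i\<in>U. s i \<in> B}"
    proof
      fix b assume "b \<in> B"
      then have "b \<in> s ` U" using assms permutes_image by blast
      then obtain i where "i \<in> U" "s i = b" by blast
      then show "b \<in> s ` {i\<in>U. s i \<in> B}" using \<open>b \<in> B\<close> by blast
    qed
  qed
  moreover have "inj_on s {i\<in>U. s i \<in> B}" using permutes_inj[OF assms(1)] inj_on_subset by blast
  ultimately show ?thesis using card_image by fastforce
qed

lemma card_union_XS:
  assumes "finite U" "B \<subseteq> U" "A \<subseteq> U"
  shows "card {s. s permutes U \<and> (\<forall>i\<in>U. s i \<in> B \<longrightarrow> i \<in> A)}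
     = (card A choose card B) * card (XS U B B)"
proof -
  let ?F = "{C. C \<subseteq> A \<and> card C = card B}"
  have fA: "finite A" using assms finite_subset by auto
  have fF: "finite ?F" by (rule finite_subset[of _ "Pow A"]) (use fA in auto)
  have eqS: "{s. s permutes U \<and> (\<forall>i\<in>U. s i \<in> B \<longrightarrow> i \<in> A)} = (\<Union>C\<in>?F. XS U B C)"
  proof
    show "{s. s permutes U \<and> (\<forall>i\<in>U. s i \<in> B \<longrightarrow> i \<in> A)} \<subseteq> (\<Union>C\<in>?F. XS U B C)"
    proof
      fix s assume "s \<in> {s. s permutes U \<and> (\<forall>i\<in>U. s i \<in> B \<longrightarrow> i \<in> A)}"
      then have s: "s permutes U" "\<forall>i\<in>U. s i \<in> B \<longrightarrow> i \<in> A" by auto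
      have "{i\<in>U. s i \<in> B} \<in> ?F" using s card_pre[OF s(1) assms(2)] by auto
      then show "s \<in> (\<Union>C\<in>?F. XS U B C)" using s unfolding XS_def by blast
    qed
    show "(\<Union>C\<in>?F. XS U B C) \<subseteq> {s. s permutes U \<and> (\<forall>i\<in>U. s i \<in> B \<longrightarrow> i \<in> A)}"
      unfolding XS_def by blast
  qed
  have fX: "\<And>C. finite (XS U B C)" using finite_permutations[OF assms(1)]
    unfolding XS_def by (rule finite_subset[rotated]) auto
  have "card (\<Union>C\<in>?F. XS U B C) = (\<Sum>C\<in>?F. card (XS U B C))"
    by (rule card_UN_disjoint[OF fF]) (use fX in \<open>auto simp: XS_def\<close>)
  also have "\<dots> = (\<Sum>C\<in>?F. card (XS U B B))"
  proof (rule sum.cong[OF HOL.refl])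
    fix C assume "C \<in> ?F"
    then have "C \<subseteq> U" "card C = card B" using assms by auto
    then show "card (XS U B C) = card (XS U B B)" using XS_eq[of U C B B] assms by simp
  qed
  also have "\<dots> = (card A choose card B) * card (XS U B B)"
    using n_subsets[of A "card B"] assms finite_subset by auto
  finally show ?thesis using eqS by simp
qed

lemma card_XS:
  assumes "finite U" "B \<subseteq> U"
  shows "card (XS U B B) = fact (card B) * fact (card U - card B)"
proof -
  have "card {s. s permutes U \<and> (\<forall>i\<in>U. s i \<in> B \<longrightarrow> i \<in> U)} = (card U choose card B) * card (XS U B B)"
    using card_union_XS[OF assms(1,2)] by blast
  moreover have "{s. s permutes U \<and> (\<forall>i\<in>U. s i \<in> B \<longrightarrow> i \<in> U)} = {s. s permutes U}" by auto
  ultimately have e: "fact (card U) = (card U choose card B) * card (XS U B B)"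
    using card_permutations[OF HOL.refl assms(1)] by simp
  have cb: "card B \<le> card U" using assms card_mono by blast
  have e2: "fact (card U) = (card U choose card B) * (fact (card B) * fact (card U - card B))"
    using binomial_fact_lemma[OF cb] by (simp add: algebra_simps)
  have "(card U choose card B) > 0" using cb by simp
  then show ?thesis using e e2 by simp
qed

lemma choose_fact_le: "(n choose c) * fact c \<le> (fact n :: nat)"
proof (cases "c \<le> n")
  case True
  then have "fact c * fact (n - c) * (n choose c) = fact n" by (rule binomial_fact_lemma)
  moreover have "fact (n - c) \<ge> (1::nat)" by (simp add: Suc_leI fact_gt_zero)
  then have "(n choose c) * fact c * 1 \<le> (n choose c) * fact c * fact (n - c)"
    by (rule mult_le_mono2)
  ultimately show ?thesis by (simp add: algebra_simps)
next
  case False then show ?thesis by (simp add: binomial_eq_0)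
qed

definition Ev :: "nat \<Rightarrow> nat set \<Rightarrow> nat set \<Rightarrow> (nat \<times> nat) set set" where
  "Ev k A B = {P. perm_mat k P \<and> (\<forall>(i, j)\<in>P. j \<in> B \<longrightarrow> i \<in> A)}"

lemma card_Ev:
  assumes "A \<subseteq> {..<k}" "B \<subseteq> {..<k}" "card A \<le> t"
  shows "card (Ev k A B) \<le> fact t * fact (k - card B)"
proof -
  let ?S = "{s. s permutes {..<k} \<and> (\<forall>i\<in>{..<k}. s i \<in> B \<longrightarrow> i \<in> A)}"
  have sub: "Ev k A B \<subseteq> graph k ` ?S"
  proof
    fix P assume "P \<in> Ev k A B"
    then have P: "perm_mat k P" "\<forall>(i, j)\<in>P. j \<in> B \<longrightarrow> i \<in> A" unfolding Ev_def by auto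
    obtain s where s: "s permutes {..<k}" "P = graph k s" using perm_graph[OF P(1)] by blast
    have "\<forall>i\<in>{..<k}. s i \<in> B \<longrightarrow> i \<in> A" using P(2) s(2) unfolding graph_def by auto
    then show "P \<in> graph k ` ?S" using s by blast
  qed
  have fS: "finite ?S" using finite_permutations[of "{..<k}"] by (rule finite_subset[rotated]) auto
  have "card (Ev k A B) \<le> card (graph k ` ?S)" using sub fS by (simp add: card_mono)
  also have "\<dots> \<le> card ?S" using card_image_le fS by blast
  also have "\<dots> = (card A choose card B) * (fact (card B) * fact (k - card B))"
    using card_union_XS[of "{..<k}" B A] card_XS[of "{..<k}" B] assms by simp
  also have "\<dots> \<le> fact (card A) * fact (k - card B)"
    using mult_le_mono1[OF choose_fact_le[of "card A" "card B"], of "fact (k - card B)"]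
    by (simp add: mult.assoc)
  also have "\<dots> \<le> fact t * fact (k - card B)" using assms(3) by (simp add: fact_mono_nat)
  finally show ?thesis .
qed

definition gf :: "nat \<Rightarrow> bool \<Rightarrow> bool \<Rightarrow> bool \<Rightarrow> nat \<times> nat \<Rightarrow> nat \<times> nat" where
  "gf k s h v = (\<lambda>(i, j). ((if h then k - 1 - (if s then j else i) else (if s then j else i)),
                           (if v then k - 1 - (if s then i else j) else (if s then i else j))))"

lemma gf_id: "(i, j) \<in> {..<k} \<times> {..<k} \<Longrightarrow> gf k False False False (i, j) = (i, j)"
  by (simp add: gf_def)

lemma gf_v: "(i, j) \<in> {..<k} \<times> {..<k} \<Longrightarrow>
  (\<lambda>(i, j). (i, k - 1 - j)) (gf k s h v (i, j)) = gf k s h (\<not> v) (i, j)"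
  by (auto simp: gf_def)

lemma gf_h: "(i, j) \<in> {..<k} \<times> {..<k} \<Longrightarrow>
  (\<lambda>(i, j). (k - 1 - i, j)) (gf k s h v (i, j)) = gf k s (\<not> h) v (i, j)"
  by (auto simp: gf_def)

lemma gf_r: "(i, j) \<in> {..<k} \<times> {..<k} \<Longrightarrow>
  (\<lambda>(i, j). (j, k - 1 - i)) (gf k s h v (i, j)) = gf k (\<not> s) v (\<not> h) (i, j)"
  by (auto simp: gf_def)

lemma sym_gf:
  assumes "sym_reach k P Q" "P \<subseteq> {..<k} \<times> {..<k}"
  shows "\<exists>s h v. Q = gf k s h v ` P"
  using assms(1)
proof induction
  case refl
  have "gf k False False False ` P = P"
    using assms(2) by (force simp: gf_id intro: image_eqI)
  then show ?case by metis
next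
  case (vstep Q)
  then obtain s h v where Q: "Q = gf k s h v ` P" by blast
  have "vrefl k Q = gf k s h (\<not> v) ` P"
    unfolding vrefl_def Q image_image using assms(2) gf_v by (intro image_cong) auto
  then show ?case by blast
next
  case (hstep Q)
  then obtain s h v where Q: "Q = gf k s h v ` P" by blast
  have "hrefl k Q = gf k s (\<not> h) v ` P"
    unfolding hrefl_def Q image_image using assms(2) gf_h by (intro image_cong) auto
  then show ?case by blast
next
  case (rstep Q)
  then obtain s h v where Q: "Q = gf k s h v ` P" by blast
  have "rot90 k Q = gf k (\<not> s) v (\<not> h) ` P"
    unfolding rot90_def Q image_image using assms(2) gf_r by (intro image_cong) auto
  then show ?case by blast
qed

lemma gf_inj: "inj_on (gf k s h v) ({..<k} \<times> {..<k})"
  by (rule inj_onI) (auto simp: gf_def split: if_splits)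

lemma card_gf_pre:
  assumes "finite S"
  shows "card {P. P \<subseteq> {..<k} \<times> {..<k} \<and> gf k s h v ` P \<in> S} \<le> card S"
proof -
  have "inj_on (image (gf k s h v)) (Pow ({..<k} \<times> {..<k}))"
    using gf_inj inj_on_image_Pow by blast
  then have "inj_on (image (gf k s h v)) {P. P \<subseteq> {..<k} \<times> {..<k} \<and> gf k s h v ` P \<in> S}"
    by (rule inj_on_subset) auto
  moreover have "image (gf k s h v) ` {P. P \<subseteq> {..<k} \<times> {..<k} \<and> gf k s h v ` P \<in> S} \<subseteq> S" by auto
  ultimately show ?thesis using card_inj_on_le assms by blast
qed

lemma card_bad_sym:
  assumes "finite S" "\<And>Q. class1 k Q \<or> class2 k Q \<or> class3 k Q \<or> class4 k Q \<Longrightarrow> Q \<in> S"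
  shows "card {P. perm_mat k P \<and> \<not> ordinary k P} \<le> 8 * card S"
proof -
  let ?T = "\<lambda>(s, h, v). {P. P \<subseteq> {..<k} \<times> {..<k} \<and> gf k s h v ` P \<in> S}"
  have sub: "{P. perm_mat k P \<and> \<not> ordinary k P} \<subseteq> (\<Union>x\<in>UNIV. ?T x)"
  proof
    fix P assume "P \<in> {P. perm_mat k P \<and> \<not> ordinary k P}"
    then have P: "perm_mat k P" "\<not> ordinary k P" by auto
    then obtain Q where Q: "sym_reach k P Q" "class1 k Q \<or> class2 k Q \<or> class3 k Q \<or> class4 k Q"
      unfolding ordinary_def reduces_to_def by blast
    have sq: "P \<subseteq> {..<k} \<times> {..<k}" using pmD1[OF P(1)] .
    obtain s h v where "Q = gf k s h v ` P" using sym_gf[OF Q(1) sq] by blast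
    then have "P \<in> ?T (s, h, v)" using sq assms(2)[OF Q(2)] by auto
    then show "P \<in> (\<Union>x\<in>UNIV. ?T x)" by blast
  qed
  have "card {P. perm_mat k P \<and> \<not> ordinary k P} \<le> card (\<Union>x\<in>UNIV. ?T x)"
    by (rule card_mono[OF _ sub]) (auto intro: finite_subset[of _ "Pow ({..<k} \<times> {..<k})"])
  also have "\<dots> \<le> (\<Sum>x\<in>UNIV. card (?T x))" by (rule card_UN_le) simp
  also have "\<dots> \<le> (\<Sum>x\<in>(UNIV :: (bool \<times> bool \<times> bool) set). card S)"
    by (rule sum_mono) (use card_gf_pre[OF assms(1)] in auto)
  also have "\<dots> = 8 * card S" by (simp add: UNIV_Times_UNIV[symmetric] del: UNIV_Times_UNIV)
  finally show ?thesis .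
qed

lemma pm_sq: "perm_mat k P \<Longrightarrow> (i, j) \<in> P \<Longrightarrow> i < k \<and> j < k"
  using pmD1 by blast

lemma pm_fin: "perm_mat k P \<Longrightarrow> finite P"
  using pmD1 by (meson finite_SigmaI finite_lessThan finite_subset)

lemma pm_row: assumes "perm_mat k P" "(i, j) \<in> P" "(i, j') \<in> P" shows "j = j'"
proof -
  have "i < k" using pm_sq assms by blast
  then have "\<exists>!j. (i, j) \<in> P" using pmD2[OF assms(1)] by blast
  then show ?thesis using ex1_eq assms(2,3) by metis
qed

lemma pm_col: assumes "perm_mat k P" "(i, j) \<in> P" "(i', j) \<in> P" shows "i = i'"
proof -
  have "j < k" using pm_sq assms by blast
  then have "\<exists>!i. (i, j) \<in> P" using pmD3[OF assms(1)] by blast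
  then show ?thesis using ex1_eq assms(2,3) by metis
qed

lemma pm_rowex: "perm_mat k P \<Longrightarrow> i < k \<Longrightarrow> \<exists>j. (i, j) \<in> P"
  using pmD2 by blast

lemma pm_colex: "perm_mat k P \<Longrightarrow> j < k \<Longrightarrow> \<exists>i. (i, j) \<in> P"
  using pmD3 by blast

lemma card_rows:
  assumes "perm_mat k P" "finite X"
  shows "card (P \<inter> (X \<times> UNIV)) \<le> card X"
proof -
  have "inj_on fst (P \<inter> (X \<times> UNIV))"
    by (rule inj_onI) (metis IntD1 pm_row[OF assms(1)] prod.collapse)
  moreover have "fst ` (P \<inter> (X \<times> UNIV)) \<subseteq> X" by auto
  ultimately show ?thesis using card_inj_on_le assms(2) by blast
qed

lemma card_cols:
  assumes "perm_mat k P" "finite Y"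
  shows "card (P \<inter> (UNIV \<times> Y)) \<le> card Y"
proof -
  have "inj_on snd (P \<inter> (UNIV \<times> Y))"
    by (rule inj_onI) (metis IntD1 pm_col[OF assms(1)] prod.collapse)
  moreover have "snd ` (P \<inter> (UNIV \<times> Y)) \<subseteq> Y" by auto
  ultimately show ?thesis using card_inj_on_le assms(2) by blast
qed

lemma ev_card:
  assumes "perm_mat k P" "\<forall>(i, j)\<in>P. j \<in> B \<longrightarrow> i \<in> A" "B \<subseteq> {..<k}" "finite A"
  shows "card B \<le> card A"
proof -
  have "B \<subseteq> snd ` (P \<inter> (A \<times> UNIV))"
  proof
    fix j assume j: "j \<in> B"
    then obtain i where i: "(i, j) \<in> P" using pm_colex[OF assms(1)] assms(3) by blast
    then have "i \<in> A" using assms(2) j by auto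
    then show "j \<in> snd ` (P \<inter> (A \<times> UNIV))" using i by force
  qed
  moreover have "finite (P \<inter> (A \<times> UNIV))" using pm_fin[OF assms(1)] by simp
  ultimately have "card B \<le> card (snd ` (P \<inter> (A \<times> UNIV)))" by (simp add: card_mono)
  also have "\<dots> \<le> card (P \<inter> (A \<times> UNIV))" using \<open>finite (P \<inter> (A \<times> UNIV))\<close> card_image_le by blast
  also have "\<dots> \<le> card A" using card_rows assms by blast
  finally show ?thesis .
qed

lemma ev_card2:
  assumes "perm_mat k P" "\<forall>(i, j)\<in>P. i \<in> A \<longrightarrow> j \<in> B" "A \<subseteq> {..<k}" "finite B"
  shows "card A \<le> card B"
proof -
  have "A \<subseteq> fst ` (P \<inter> (UNIV \<times> B))"
  proof
    fix i assume i: "i \<in> A"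
    then obtain j where j: "(i, j) \<in> P" using pm_rowex[OF assms(1)] assms(3) by blast
    then have "j \<in> B" using assms(2) i by auto
    then show "i \<in> fst ` (P \<inter> (UNIV \<times> B))" using j by force
  qed
  moreover have "finite (P \<inter> (UNIV \<times> B))" using pm_fin[OF assms(1)] by simp
  ultimately have "card A \<le> card (fst ` (P \<inter> (UNIV \<times> B)))" by (simp add: card_mono)
  also have "\<dots> \<le> card (P \<inter> (UNIV \<times> B))" using \<open>finite (P \<inter> (UNIV \<times> B))\<close> card_image_le by blast
  also have "\<dots> \<le> card B" using card_cols assms by blast
  finally show ?thesis .
qed

lemma rows_split:
  assumes "perm_mat k P" "R \<subseteq> {..<k}" "\<forall>(i, j)\<in>P. i \<in> R \<longrightarrow> j \<in> Y \<or> (i, j) \<in> Z" "finite Y"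
  shows "card R \<le> card Y + card (P \<inter> Z)"
proof -
  have fP: "finite P" using pm_fin[OF assms(1)] .
  have "R \<subseteq> fst ` (P \<inter> (UNIV \<times> Y)) \<union> fst ` (P \<inter> Z)"
  proof
    fix i assume i: "i \<in> R"
    then obtain j where j: "(i, j) \<in> P" using pm_rowex[OF assms(1)] assms(2) by blast
    then have "j \<in> Y \<or> (i, j) \<in> Z" using assms(3) i by auto
    then show "i \<in> fst ` (P \<inter> (UNIV \<times> Y)) \<union> fst ` (P \<inter> Z)" using j by force
  qed
  then have "card R \<le> card (fst ` (P \<inter> (UNIV \<times> Y)) \<union> fst ` (P \<inter> Z))"
    using fP by (simp add: card_mono)
  also have "\<dots> \<le> card (fst ` (P \<inter> (UNIV \<times> Y))) + card (fst ` (P \<inter> Z))" by (rule card_Un_le)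
  also have "\<dots> \<le> card (P \<inter> (UNIV \<times> Y)) + card (P \<inter> Z)"
    using fP by (intro add_mono card_image_le) auto
  also have "\<dots> \<le> card Y + card (P \<inter> Z)" using card_cols assms by simp
  finally show ?thesis .
qed

lemma few_card: "few_adjacent P S \<Longrightarrow> card (P \<inter> S) \<le> 2"
  unfolding few_adjacent_def by blast

lemma class1_ev:
  assumes "class1 k Q"
  shows "\<exists>d\<in>{..<3}. \<exists>b\<in>{1..k-1-d}. Q \<in> Ev k {0..<b+d} {0..<b}"
proof -
  obtain a b where Q: "perm_mat k Q" "0 < a" "a < k" "0 < b" "b < k"
    "Q \<subseteq> ({0..<a} \<times> {0..<b}) \<union> ({a..<k} \<times> {b..<k}) \<union> ({0..<a} \<times> {b..<k})"
    "few_adjacent Q ({0..<a} \<times> {b..<k})"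
    using assms unfolding class1_def by blast
  have ev: "\<forall>(i, j)\<in>Q. j \<in> {0..<b} \<longrightarrow> i \<in> {0..<a}" using Q(6) by auto
  have "card {0..<b} \<le> card {0..<a}" by (rule ev_card[OF Q(1) ev]) (use Q in auto)
  then have ba: "b \<le> a" by simp
  have "card {0..<a} \<le> card {0..<b} + card (Q \<inter> ({0..<a} \<times> {b..<k}))"
    by (rule rows_split[OF Q(1)]) (use Q(3,6) in auto)
  then have ab: "a \<le> b + 2" using few_card[OF Q(7)] by simp
  have "a - b \<in> {..<3}" using ab ba by auto
  moreover have "b \<in> {1..k-1-(a-b)}" using Q ba by auto
  moreover have "Q \<in> Ev k {0..<b+(a-b)} {0..<b}" using ev Q(1) ba by (simp add: Ev_def)
  ultimately show ?thesis by blast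
qed

lemma class2_facts:
  assumes "class2_split k Q a b c"
  shows "\<forall>(i, j)\<in>Q. j \<in> {0..<c} \<longrightarrow> i \<in> {a..<b}" "c \<le> b - a" "b - a \<le> c + 2" "2 \<le> c"
    "0 < a" "a < b" "b < k" "perm_mat k Q"
proof -
  have Q: "perm_mat k Q" "0 < a" "a < b" "b < k" "0 < c" "c < k"
     "card (Q \<inter> ({a..<b} \<times> {0..<c})) \<ge> 2"
     "Q \<subseteq> ({0..<a} \<times> {c..<k}) \<union> ({b..<k} \<times> {c..<k}) \<union> ({a..<b} \<times> {0..<c})
          \<union> ({a..<b} \<times> {c..<k})"
     "few_adjacent Q ({a..<b} \<times> {c..<k})"
    using assms unfolding class2_split_def by blast+
  show ev: "\<forall>(i, j)\<in>Q. j \<in> {0..<c} \<longrightarrow> i \<in> {a..<b}" using Q(8) by auto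
  have "card {0..<c} \<le> card {a..<b}" by (rule ev_card[OF Q(1) ev]) (use Q in auto)
  then show "c \<le> b - a" by simp
  have "card {a..<b} \<le> card {0..<c} + card (Q \<inter> ({a..<b} \<times> {c..<k}))"
    by (rule rows_split[OF Q(1)]) (use Q(4,8) in auto)
  then show "b - a \<le> c + 2" using few_card[OF Q(9)] by simp
  have "card (Q \<inter> ({a..<b} \<times> {0..<c})) \<le> card (Q \<inter> (UNIV \<times> {0..<c}))"
    by (rule card_mono) (use pm_fin[OF Q(1)] in auto)
  also have "\<dots> \<le> card {0..<c}" using card_cols[OF Q(1)] by blast
  finally show "2 \<le> c" using Q(7) by simp
  show "0 < a" "a < b" "b < k" "perm_mat k Q" using Q by auto
qed

lemma class2_ev:
  assumes "class2 k Q"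
  shows "\<exists>d\<in>{..<3}. \<exists>c\<in>{2..k-2-d}. \<exists>a\<in>{1..k-1-c-d}. Q \<in> Ev k {a..<a+c+d} {0..<c}"
proof -
  obtain a b c where s: "class2_split k Q a b c" using assms class2_def by blast
  note f = class2_facts[OF s]
  have "b - a - c \<in> {..<3}" using f by auto
  moreover have "c \<in> {2..k-2-(b-a-c)}" using f by auto
  moreover have "a \<in> {1..k-1-c-(b-a-c)}" using f by auto
  moreover have "Q \<in> Ev k {a..<a+c+(b-a-c)} {0..<c}" using f by (simp add: Ev_def)
  ultimately show ?thesis by blast
qed

lemma rowmap_perm:
  assumes "perm_mat k P" "bij_betw \<rho> {..<k} {..<k}"
  shows "perm_mat k ((\<lambda>(i, j). (\<rho> i, j)) ` P)"
proof -
  have inj: "\<And>x y. x < k \<Longrightarrow> y < k \<Longrightarrow> \<rho> x = \<rho> y \<Longrightarrow> x = y"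
    using assms(2) unfolding bij_betw_def inj_on_def by blast
  have into: "\<And>x. x < k \<Longrightarrow> \<rho> x < k" using assms(2) bij_betwE by blast
  have onto: "\<And>y. y < k \<Longrightarrow> \<exists>x<k. \<rho> x = y" using assms(2)
    by (metis bij_betw_imp_surj_on imageE lessThan_iff)
  have mem: "(i', j) \<in> (\<lambda>(i, j). (\<rho> i, j)) ` P \<longleftrightarrow> (\<exists>i. (i, j) \<in> P \<and> i' = \<rho> i)" for i' j
    by auto
  show ?thesis unfolding perm_mat_def
  proof (intro conjI allI impI)
    show "(\<lambda>(i, j). (\<rho> i, j)) ` P \<subseteq> {..<k} \<times> {..<k}" using pm_sq[OF assms(1)] into by auto
  next
    fix i' assume "i' < k"
    then obtain i where i: "i < k" "\<rho> i = i'" using onto by blast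
    obtain j where j: "(i, j) \<in> P" using pm_rowex[OF assms(1) i(1)] by blast
    show "\<exists>!j. (i', j) \<in> (\<lambda>(i, j). (\<rho> i, j)) ` P"
    proof (rule ex1I[of _ j])
      show "(i', j) \<in> (\<lambda>(i, j). (\<rho> i, j)) ` P" using mem i j by blast
    next
      fix j' assume "(i', j') \<in> (\<lambda>(i, j). (\<rho> i, j)) ` P"
      then obtain i2 where i2: "(i2, j') \<in> P" "i' = \<rho> i2" using mem by blast
      then have "i2 = i" using inj[of i2 i] pm_sq[OF assms(1) i2(1)] i by auto
      then show "j' = j" using pm_row[OF assms(1)] i2(1) j by blast
    qed
  next
    fix j assume "j < k"
    then obtain i where i: "(i, j) \<in> P" using pm_colex[OF assms(1)] by blast
    show "\<exists>!i'. (i', j) \<in> (\<lambda>(i, j). (\<rho> i, j)) ` P"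
    proof (rule ex1I[of _ "\<rho> i"])
      show "(\<rho> i, j) \<in> (\<lambda>(i, j). (\<rho> i, j)) ` P" using mem i by blast
    next
      fix i' assume "(i', j) \<in> (\<lambda>(i, j). (\<rho> i, j)) ` P"
      then obtain i2 where i2: "(i2, j) \<in> P" "i' = \<rho> i2" using mem by blast
      then show "i' = \<rho> i" using pm_col[OF assms(1) i2(1) i] by simp
    qed
  qed
qed

lemma class3_ev:
  assumes "class3 k P"
  shows "\<exists>d\<in>{..<3}. \<exists>c\<in>{2..k-2-d}. \<exists>a\<in>{1..k-1-c-d}. P \<in> Ev k (insert 0 {a+1..<a+c+d}) {0..<c}"
proof -
  obtain X a b c r j where X: "class2_split k X a b c" "a \<le> r" "r < b" "P = move_row_top r X"
    using assms unfolding class3_def by blast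
  note f = class2_facts[OF X(1)]
  define \<rho> where "\<rho> i = (if i = r then 0 else if i < r then i + 1 else i)" for i
  have Pe: "P = (\<lambda>(i, j). (\<rho> i, j)) ` X"
    unfolding X(4) move_row_top_def \<rho>_def by (rule image_cong) auto
  have rk: "r < k" using X f by simp
  have "inj_on \<rho> {..<k}" by (rule inj_onI) (auto simp: \<rho>_def split: if_splits)
  moreover have "\<rho> ` {..<k} \<subseteq> {..<k}" using rk by (auto simp: \<rho>_def)
  ultimately have "bij_betw \<rho> {..<k} {..<k}"
    by (simp add: bij_betw_def endo_inj_surj)
  then have pm: "perm_mat k P" using rowmap_perm[OF f(8)] Pe by simp
  have ev0: "i \<in> insert 0 {a+1..<b}" if h: "(i, j) \<in> P" "j < c" for i j
  proof -
    obtain i0 where i0: "(i0, j) \<in> X" "i = \<rho> i0" using Pe h(1) by auto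
    then have "i0 \<in> {a..<b}" using f(1) h(2) by auto
    then show ?thesis using i0(2) X(2,3) by (auto simp: \<rho>_def)
  qed
  have ev: "\<forall>(i, j)\<in>P. j \<in> {0..<c} \<longrightarrow> i \<in> insert 0 {a+1..<b}" using ev0 by auto
  have "b - a - c \<in> {..<3}" using f by auto
  moreover have "c \<in> {2..k-2-(b-a-c)}" using f by auto
  moreover have "a \<in> {1..k-1-c-(b-a-c)}" using f by auto
  moreover have "P \<in> Ev k (insert 0 {a+1..<a+c+(b-a-c)}) {0..<c}" using f ev pm by (simp add: Ev_def)
  ultimately show ?thesis by blast
qed

lemma class4_ev:
  assumes "class4 k Q"
  shows "\<exists>m\<in>{2..k-2}. \<exists>a\<in>{1..<k-m}. \<exists>c\<in>{1..<m}. Q \<in> Ev k ({..<k} - {a..<a+m}) {c..<c+(k-m)}"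
proof -
  obtain a b c d where Q: "perm_mat k Q" "0 < a" "a < b" "b < k" "0 < c" "c < d" "d < k"
     "Q \<subseteq> ({0..<a} \<times> {c..<d}) \<union> ({a..<b} \<times> {0..<c}) \<union> ({a..<b} \<times> {d..<k})
          \<union> ({b..<k} \<times> {c..<d})"
    using assms unfolding class4_def by blast
  have ev: "\<forall>(i, j)\<in>Q. j \<in> {c..<d} \<longrightarrow> i \<in> {..<k} - {a..<b}"
    using Q(8) pm_sq[OF Q(1)] by fastforce
  have ev2: "\<forall>(i, j)\<in>Q. i \<in> {..<k} - {a..<b} \<longrightarrow> j \<in> {c..<d}"
    using Q(8) by fastforce
  have cA: "card ({..<k} - {a..<b}) = k - (b - a)" using Q by (subst card_Diff_subset) auto
  have "card {c..<d} \<le> card ({..<k} - {a..<b})" by (rule ev_card[OF Q(1) ev]) (use Q in auto)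
  moreover have "card ({..<k} - {a..<b}) \<le> card {c..<d}" by (rule ev_card2[OF Q(1) ev2]) auto
  ultimately have e: "d - c = k - (b - a)" using cA by simp
  have "b - a \<in> {2..k-2}" using Q e by auto
  moreover have "a \<in> {1..<k-(b-a)}" using Q by auto
  moreover have "c \<in> {1..<b-a}" using Q e by auto
  moreover have "Q \<in> Ev k ({..<k} - {a..<a+(b-a)}) {c..<c+(k-(b-a))}"
  proof -
    have e1: "a + (b - a) = b" using Q by simp
    have e2: "c + (k - (b - a)) = d" using Q e by simp
    show ?thesis unfolding e1 e2 Ev_def using ev Q(1) by simp
  qed
  ultimately show ?thesis by blast
qed

lemma fact_prod_aux: "m \<le> y \<Longrightarrow> fact (m + d) * fact y \<le> fact m * (fact (d + y) :: nat)"
proof (induction d)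
  case 0 then show ?case by simp
next
  case (Suc d)
  have "fact (m + Suc d) * fact y = Suc (m + d) * (fact (m + d) * fact y)"
    by (simp only: add_Suc_right fact_Suc of_nat_id mult.assoc)
  also have "\<dots> \<le> Suc (m + d) * (fact m * fact (d + y))" using Suc by (intro mult_le_mono2) simp
  also have "\<dots> \<le> Suc (d + y) * (fact m * fact (d + y))" using Suc.prems by (intro mult_le_mono1) simp
  also have "\<dots> = fact m * fact (Suc (d + y))" by (simp add: algebra_simps)
  also have "Suc (d + y) = Suc d + y" by simp
  finally show ?case .
qed

lemma fact_prod_le:
  assumes "m \<le> x" "m \<le> y"
  shows "fact x * fact y \<le> fact m * (fact (x + y - m) :: nat)"
proof -
  have "fact (m + (x - m)) * fact y \<le> fact m * (fact ((x - m) + y) :: nat)"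
    using fact_prod_aux assms(2) by blast
  moreover have "m + (x - m) = x" "(x - m) + y = x + y - m" using assms by auto
  ultimately show ?thesis by simp
qed

lemma sum_split_le:
  fixes f :: "nat \<Rightarrow> nat"
  assumes "\<And>b. b \<in> {l..h} \<Longrightarrow> f b \<le> M1" "\<And>b. b \<in> {l<..<h} \<Longrightarrow> f b \<le> M2"
  shows "sum f {l..h} \<le> 2 * M1 + h * M2"
proof (cases "l \<le> h")
  case False then show ?thesis by simp
next
  case True
  have e: "{l..h} = {l, h} \<union> {l<..<h}" using True by auto
  have "sum f ({l, h} \<union> {l<..<h}) + sum f ({l, h} \<inter> {l<..<h}) = sum f {l, h} + sum f {l<..<h}"
    by (rule sum.union_inter) auto
  then have "sum f {l..h} \<le> sum f {l, h} + sum f {l<..<h}" unfolding e by linarith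
  moreover have "sum f {l, h} \<le> 2 * M1"
  proof (cases "l = h")
    case True then show ?thesis using assms(1)[of l] by simp
  next
    case False
    then have "sum f {l, h} = f l + f h" by simp
    also have "\<dots> \<le> M1 + M1" using assms(1)[of l] assms(1)[of h] \<open>l \<le> h\<close> by (intro add_mono) auto
    finally show ?thesis by simp
  qed
  moreover have "sum f {l<..<h} \<le> card {l<..<h} * M2"
    using sum_bounded_above[of "{l<..<h}" f M2] assms(2) by simp
  moreover have "card {l<..<h} * M2 \<le> h * M2" by (intro mult_le_mono1) simp
  ultimately show ?thesis by linarith
qed

lemma mul_fact_le: "a \<le> n + 1 \<Longrightarrow> a * fact n \<le> (fact (n + 1) :: nat)"
proof -
  assume "a \<le> n + 1"
  then have "a * fact n \<le> (n + 1) * (fact n :: nat)" by (rule mult_le_mono1)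
  then show ?thesis by simp
qed

lemma lin_aux: "a \<le> (k::nat) \<Longrightarrow> 2 * (6 * F) + a * (24 * G) \<le> 12 * F + 24 * (k * G)"
proof -
  assume "a \<le> k"
  then have "a * (24 * G) \<le> k * (24 * G)" by (rule mult_le_mono1)
  also have "\<dots> = 24 * (k * G)" by (simp only: ac_simps)
  finally show ?thesis by linarith
qed

lemma lin_aux2: "a \<le> (k::nat) \<Longrightarrow> 2 * (k * (24 * F)) + a * (k * (120 * G)) \<le> 48 * (k * F) + 120 * (k * k * G)"
proof -
  assume "a \<le> k"
  then have "a * (k * (120 * G)) \<le> k * (k * (120 * G))" by (rule mult_le_mono1)
  also have "\<dots> = 120 * (k * k * G)" by (simp only: ac_simps)
  finally show ?thesis by (simp only: ac_simps)
qed

lemma kF2: "2 \<le> k \<Longrightarrow> k * fact (k - 2) \<le> 2 * (fact (k - 1) :: nat)"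
proof -
  assume k: "2 \<le> k"
  have e: "k - 1 = Suc (k - 2)" using k by simp
  have f: "fact (k - 1) = (k - 1) * (fact (k - 2) :: nat)"
    unfolding e by (simp only: fact_Suc of_nat_id)
  have "k * fact (k - 2) \<le> (2 * (k - 1)) * (fact (k - 2) :: nat)"
    using k by (intro mult_le_mono1) simp
  also have "\<dots> = 2 * fact (k - 1)" unfolding f by (simp only: ac_simps)
  finally show ?thesis .
qed

lemma kkF3: "3 \<le> k \<Longrightarrow> k * k * fact (k - 3) \<le> 9 * (fact (k - 1) :: nat)"
proof -
  assume k: "3 \<le> k"
  obtain j where j: "k = j + 3" using k by (metis add.commute le_iff_add)
  have f: "fact (k - 1) = (j + 2) * (j + 1) * (fact (k - 3) :: nat)"
  proof -
    have "k - 1 = Suc (Suc j)" "k - 3 = j" using j by simp_all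
    then show ?thesis by (simp only: fact_Suc of_nat_id) (simp add: algebra_simps)
  qed
  have "k * k \<le> 9 * ((j + 2) * (j + 1))" unfolding j by (simp add: algebra_simps)
  then have "k * k * fact (k - 3) \<le> 9 * ((j + 2) * (j + 1)) * (fact (k - 3) :: nat)"
    by (rule mult_le_mono1)
  also have "\<dots> = 9 * fact (k - 1)" unfolding f by (simp only: ac_simps)
  finally show ?thesis .
qed

lemma bound1:
  assumes k: "4 \<le> k" and d: "d \<le> 2"
  shows "(\<Sum>b\<in>{1..k-1-d}. fact (b + d) * fact (k - b)) \<le> 60 * (fact (k - 1) :: nat)"
proof -
  have "(\<Sum>b\<in>{1..k-1-d}. fact (b + d) * fact (k - b)) \<le> 2 * (6 * fact (k - 1)) + (k - 1 - d) * (24 * fact (k - 2))"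
  proof (rule sum_split_le)
    fix b assume b: "b \<in> {1..k-1-d}"
    have "fact (b + d) * fact (k - b) \<le> fact (1 + d) * (fact (b + d + (k - b) - (1 + d)) :: nat)"
      by (rule fact_prod_le) (use b in auto)
    also have "b + d + (k - b) - (1 + d) = k - 1" using b by auto
    finally have "fact (b + d) * fact (k - b) \<le> fact (1 + d) * (fact (k - 1) :: nat)" .
    also have "\<dots> \<le> fact 3 * fact (k - 1)" using d by (intro mult_le_mono1 fact_mono) auto
    finally show "fact (b + d) * fact (k - b) \<le> 6 * (fact (k - 1) :: nat)" by (simp add: fact_numeral)
  next
    fix b assume b: "b \<in> {1<..<k-1-d}"
    have "fact (b + d) * fact (k - b) \<le> fact (2 + d) * (fact (b + d + (k - b) - (2 + d)) :: nat)"
      by (rule fact_prod_le) (use b in auto)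
    also have "b + d + (k - b) - (2 + d) = k - 2" using b by auto
    finally have "fact (b + d) * fact (k - b) \<le> fact (2 + d) * (fact (k - 2) :: nat)" .
    also have "\<dots> \<le> fact 4 * fact (k - 2)" using d by (intro mult_le_mono1 fact_mono) auto
    finally show "fact (b + d) * fact (k - b) \<le> 24 * (fact (k - 2) :: nat)" by (simp add: fact_numeral)
  qed
  also have "\<dots> \<le> 12 * fact (k - 1) + 24 * (k * fact (k - 2))"
    by (rule lin_aux) simp
  also have "\<dots> \<le> 12 * fact (k - 1) + 24 * (2 * fact (k - 1))" using kF2[of k] k by linarith
  finally show ?thesis by simp
qed

lemma bound2:
  assumes k: "4 \<le> k" and d: "d \<le> 2"
  shows "(\<Sum>c\<in>{2..k-2-d}. k * (fact (c + d) * fact (k - c))) \<le> 1176 * (fact (k - 1) :: nat)"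
proof -
  have "(\<Sum>c\<in>{2..k-2-d}. k * (fact (c + d) * fact (k - c))) \<le> 2 * (k * (24 * fact (k - 2))) + (k - 2 - d) * (k * (120 * fact (k - 3)))"
  proof (rule sum_split_le)
    fix c assume c: "c \<in> {2..k-2-d}"
    have "fact (c + d) * fact (k - c) \<le> fact (2 + d) * (fact (c + d + (k - c) - (2 + d)) :: nat)"
      by (rule fact_prod_le) (use c in auto)
    also have "c + d + (k - c) - (2 + d) = k - 2" using c by auto
    finally have "fact (c + d) * fact (k - c) \<le> fact (2 + d) * (fact (k - 2) :: nat)" .
    also have "\<dots> \<le> fact 4 * fact (k - 2)" using d by (intro mult_le_mono1 fact_mono) auto
    finally show "k * (fact (c + d) * fact (k - c)) \<le> k * (24 * (fact (k - 2) :: nat))"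
      by (intro mult_le_mono2) (simp add: fact_numeral)
  next
    fix c assume c: "c \<in> {2<..<k-2-d}"
    have "fact (c + d) * fact (k - c) \<le> fact (3 + d) * (fact (c + d + (k - c) - (3 + d)) :: nat)"
      by (rule fact_prod_le) (use c in auto)
    also have "c + d + (k - c) - (3 + d) = k - 3" using c by auto
    finally have "fact (c + d) * fact (k - c) \<le> fact (3 + d) * (fact (k - 3) :: nat)" .
    also have "\<dots> \<le> fact 5 * fact (k - 3)" using d by (intro mult_le_mono1 fact_mono) auto
    finally show "k * (fact (c + d) * fact (k - c)) \<le> k * (120 * (fact (k - 3) :: nat))"
      by (intro mult_le_mono2) (simp add: fact_numeral)
  qed
  also have "\<dots> \<le> 48 * (k * fact (k - 2)) + 120 * (k * k * fact (k - 3))"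
    by (rule lin_aux2) simp
  also have "\<dots> \<le> 48 * (2 * fact (k - 1)) + 120 * (9 * fact (k - 1))"
    using kF2[of k] kkF3[of k] k by (intro add_mono) simp_all
  finally show ?thesis by simp
qed

lemma bound4:
  assumes k: "4 \<le> k"
  shows "(\<Sum>m\<in>{2..k-2}. (k - m - 1) * ((m - 1) * (fact (k - m) * fact m))) \<le> 60 * (fact (k - 1) :: nat)"
proof -
  have "(\<Sum>m\<in>{2..k-2}. (k - m - 1) * ((m - 1) * (fact (k - m) * fact m))) \<le> 2 * (6 * fact (k - 1)) + (k - 2) * (24 * fact (k - 2))"
  proof (rule sum_split_le)
    fix m assume m: "m \<in> {2..k-2}"
    have "(k - m - 1) * ((m - 1) * (fact (k - m) * fact m)) = ((k - m - 1) * fact (k - m)) * ((m - 1) * fact m)"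
      by (simp only: ac_simps)
    also have "\<dots> \<le> fact (k - m + 1) * (fact (m + 1) :: nat)"
      by (intro mult_le_mono mul_fact_le) simp_all
    also have "\<dots> = fact (m + 1) * fact (k - m + 1)" by simp
    also have "\<dots> \<le> fact 3 * (fact (m + 1 + (k - m + 1) - 3) :: nat)"
      by (rule fact_prod_le) (use m in auto)
    also have "m + 1 + (k - m + 1) - 3 = k - 1" using m by auto
    finally show "(k - m - 1) * ((m - 1) * (fact (k - m) * fact m)) \<le> 6 * (fact (k - 1) :: nat)"
      by (simp add: fact_numeral)
  next
    fix m assume m: "m \<in> {2<..<k-2}"
    have "(k - m - 1) * ((m - 1) * (fact (k - m) * fact m)) = ((k - m - 1) * fact (k - m)) * ((m - 1) * fact m)"
      by (simp only: ac_simps)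
    also have "\<dots> \<le> fact (k - m + 1) * (fact (m + 1) :: nat)"
      by (intro mult_le_mono mul_fact_le) simp_all
    also have "\<dots> = fact (m + 1) * fact (k - m + 1)" by simp
    also have "\<dots> \<le> fact 4 * (fact (m + 1 + (k - m + 1) - 4) :: nat)"
      by (rule fact_prod_le) (use m in auto)
    also have "m + 1 + (k - m + 1) - 4 = k - 2" using m by auto
    finally show "(k - m - 1) * ((m - 1) * (fact (k - m) * fact m)) \<le> 24 * (fact (k - 2) :: nat)"
      by (simp add: fact_numeral)
  qed
  also have "\<dots> \<le> 12 * fact (k - 1) + 24 * (k * fact (k - 2))"
    by (rule lin_aux) simp
  also have "\<dots> \<le> 12 * fact (k - 1) + 24 * (2 * fact (k - 1))" using kF2[of k] k by linarith
  finally show ?thesis by simp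
qed

lemma Ev_perm: "Ev k A B \<subseteq> {P. perm_mat k P}" unfolding Ev_def by auto

lemma card_S1:
  assumes k: "4 \<le> k"
  shows "card (\<Union>d\<in>{..<3}. \<Union>b\<in>{1..k-1-d}. Ev k {0..<b+d} {0..<b}) \<le> 180 * fact (k - 1)"
proof -
  have "card (\<Union>d\<in>{..<3}. \<Union>b\<in>{1..k-1-d}. Ev k {0..<b+d} {0..<b})
      \<le> (\<Sum>d\<in>{..<3}. card (\<Union>b\<in>{1..k-1-d}. Ev k {0..<b+d} {0..<b}))"
    by (rule card_UN_le) simp
  also have "\<dots> \<le> (\<Sum>d\<in>{..<3}. \<Sum>b\<in>{1..k-1-d}. card (Ev k {0..<b+d} {0..<b}))"
    by (intro sum_mono card_UN_le) simp
  also have "\<dots> \<le> (\<Sum>d\<in>{..<3}. \<Sum>b\<in>{1..k-1-d}. fact (b + d) * fact (k - b))"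
  proof (intro sum_mono)
    fix d b assume "d \<in> {..<3}" "b \<in> {1..k-1-d}"
    have "card (Ev k {0..<b+d} {0..<b}) \<le> fact (b + d) * fact (k - card {0..<b})"
      by (rule card_Ev) (use \<open>b \<in> {1..k-1-d}\<close> in auto)
    then show "card (Ev k {0..<b+d} {0..<b}) \<le> fact (b + d) * fact (k - b)" by simp
  qed
  also have "\<dots> \<le> (\<Sum>d\<in>{..<3::nat}. 60 * fact (k - 1))"
    by (intro sum_mono bound1[OF k]) simp
  also have "\<dots> = 180 * fact (k - 1)" by simp
  finally show ?thesis .
qed

lemma card_S2:
  assumes k: "4 \<le> k"
    and AC: "\<And>a c d. a \<in> {1..k-1-c-d} \<Longrightarrow> c \<in> {2..k-2-d} \<Longrightarrow> AA a c d \<subseteq> {..<k} \<and> card (AA a c d) \<le> c + d"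
  shows "card (\<Union>d\<in>{..<3}. \<Union>c\<in>{2..k-2-d}. \<Union>a\<in>{1..k-1-c-d}. Ev k (AA a c d) {0..<c}) \<le> 3528 * fact (k - 1)"
proof -
  have "card (\<Union>d\<in>{..<3}. \<Union>c\<in>{2..k-2-d}. \<Union>a\<in>{1..k-1-c-d}. Ev k (AA a c d) {0..<c})
      \<le> (\<Sum>d\<in>{..<3}. card (\<Union>c\<in>{2..k-2-d}. \<Union>a\<in>{1..k-1-c-d}. Ev k (AA a c d) {0..<c}))"
    by (rule card_UN_le) simp
  also have "\<dots> \<le> (\<Sum>d\<in>{..<3}. \<Sum>c\<in>{2..k-2-d}. card (\<Union>a\<in>{1..k-1-c-d}. Ev k (AA a c d) {0..<c}))"
    by (intro sum_mono card_UN_le) simp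
  also have "\<dots> \<le> (\<Sum>d\<in>{..<3}. \<Sum>c\<in>{2..k-2-d}. \<Sum>a\<in>{1..k-1-c-d}. card (Ev k (AA a c d) {0..<c}))"
    by (intro sum_mono card_UN_le) simp
  also have "\<dots> \<le> (\<Sum>d\<in>{..<3}. \<Sum>c\<in>{2..k-2-d}. \<Sum>a\<in>{1..k-1-c-d}. fact (c + d) * fact (k - c))"
  proof (intro sum_mono)
    fix d c a assume h: "d \<in> {..<3}" "c \<in> {2..k-2-d}" "a \<in> {1..k-1-c-d}"
    have "card (Ev k (AA a c d) {0..<c}) \<le> fact (c + d) * fact (k - card {0..<c})"
      by (rule card_Ev) (use h AC[OF h(3,2)] in auto)
    then show "card (Ev k (AA a c d) {0..<c}) \<le> fact (c + d) * fact (k - c)" by simp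
  qed
  also have "\<dots> \<le> (\<Sum>d\<in>{..<3}. \<Sum>c\<in>{2..k-2-d}. k * (fact (c + d) * fact (k - c)))"
  proof (intro sum_mono)
    fix d c assume h: "d \<in> {..<3}" "c \<in> {2..k-2-d}"
    have "(\<Sum>a\<in>{1..k-1-c-d}. fact (c + d) * fact (k - c)) = card {1..k-1-c-d} * (fact (c + d) * fact (k - c))"
      by simp
    also have "\<dots> \<le> k * (fact (c + d) * fact (k - c))" by (intro mult_le_mono1) simp
    finally show "(\<Sum>a\<in>{1..k-1-c-d}. fact (c + d) * fact (k - c)) \<le> k * (fact (c + d) * fact (k - c))" .
  qed
  also have "\<dots> \<le> (\<Sum>d\<in>{..<3::nat}. 1176 * fact (k - 1))"
    by (intro sum_mono bound2[OF k]) simp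
  also have "\<dots> = 3528 * fact (k - 1)" by simp
  finally show ?thesis .
qed

lemma card_S4:
  assumes k: "4 \<le> k"
  shows "card (\<Union>m\<in>{2..k-2}. \<Union>a\<in>{1..<k-m}. \<Union>c\<in>{1..<m}. Ev k ({..<k} - {a..<a+m}) {c..<c+(k-m)})
     \<le> 60 * fact (k - 1)"
proof -
  have "card (\<Union>m\<in>{2..k-2}. \<Union>a\<in>{1..<k-m}. \<Union>c\<in>{1..<m}. Ev k ({..<k} - {a..<a+m}) {c..<c+(k-m)})
      \<le> (\<Sum>m\<in>{2..k-2}. card (\<Union>a\<in>{1..<k-m}. \<Union>c\<in>{1..<m}. Ev k ({..<k} - {a..<a+m}) {c..<c+(k-m)}))"
    by (rule card_UN_le) simp
  also have "\<dots> \<le> (\<Sum>m\<in>{2..k-2}. \<Sum>a\<in>{1..<k-m}. card (\<Union>c\<in>{1..<m}. Ev k ({..<k} - {a..<a+m}) {c..<c+(k-m)}))"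
    by (intro sum_mono card_UN_le) simp
  also have "\<dots> \<le> (\<Sum>m\<in>{2..k-2}. \<Sum>a\<in>{1..<k-m}. \<Sum>c\<in>{1..<m}. card (Ev k ({..<k} - {a..<a+m}) {c..<c+(k-m)}))"
    by (intro sum_mono card_UN_le) simp
  also have "\<dots> \<le> (\<Sum>m\<in>{2..k-2}. \<Sum>a\<in>{1..<k-m}. \<Sum>c\<in>{1..<m}. fact (k - m) * fact m)"
  proof (intro sum_mono)
    fix m a c assume h: "m \<in> {2..k-2}" "a \<in> {1..<k-m}" "c \<in> {1..<m}"
    have cA: "card ({..<k} - {a..<a+m}) = k - m" using h by (subst card_Diff_subset) auto
    have "card (Ev k ({..<k} - {a..<a+m}) {c..<c+(k-m)}) \<le> fact (k - m) * fact (k - card {c..<c+(k-m)})"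
      by (rule card_Ev) (use h cA in auto)
    moreover have "k - card {c..<c+(k-m)} = m" using h by simp
    ultimately show "card (Ev k ({..<k} - {a..<a+m}) {c..<c+(k-m)}) \<le> fact (k - m) * fact m" by simp
  qed
  also have "\<dots> = (\<Sum>m\<in>{2..k-2}. (k - m - 1) * ((m - 1) * (fact (k - m) * fact m)))"
    by simp
  also have "\<dots> \<le> 60 * fact (k - 1)" by (rule bound4[OF k])
  finally show ?thesis .
qed

lemma card_bad:
  assumes k: "4 \<le> k"
  shows "card {P. perm_mat k P \<and> \<not> ordinary k P} \<le> 58368 * fact (k - 1)"
proof -
  define S1 where "S1 = (\<Union>d\<in>{..<3}. \<Union>b\<in>{1..k-1-d}. Ev k {0..<b+d} {0..<b})"
  define S2 where "S2 = (\<Union>d\<in>{..<3}. \<Union>c\<in>{2..k-2-d}. \<Union>a\<in>{1..k-1-c-d}. Ev k ((\<lambda>a c d. {a..<a+c+d}) a c d) {0..<c})"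
  define S3 where "S3 = (\<Union>d\<in>{..<3}. \<Union>c\<in>{2..k-2-d}. \<Union>a\<in>{1..k-1-c-d}. Ev k ((\<lambda>a c d. insert 0 {a+1..<a+c+d}) a c d) {0..<c})"
  define S4 where "S4 = (\<Union>m\<in>{2..k-2}. \<Union>a\<in>{1..<k-m}. \<Union>c\<in>{1..<m}. Ev k ({..<k} - {a..<a+m}) {c..<c+(k-m)})"
  define S where "S = S1 \<union> S2 \<union> S3 \<union> S4"
  have c1: "card S1 \<le> 180 * fact (k - 1)" unfolding S1_def by (rule card_S1[OF k])
  have c2: "card S2 \<le> 3528 * fact (k - 1)" unfolding S2_def
    by (rule card_S2[OF k]) auto
  have c3: "card S3 \<le> 3528 * fact (k - 1)" unfolding S3_def
  proof (rule card_S2[OF k])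
    fix a c d assume h: "a \<in> {1..k-1-c-d}" "c \<in> {2..k-2-d}"
    have "card (insert 0 {a+1..<a+c+d}) \<le> Suc (card {a+1..<a+c+d})" by (rule card_insert_le_m1) simp_all
    then show "insert 0 {a+1..<a+c+d} \<subseteq> {..<k} \<and> card (insert 0 {a+1..<a+c+d}) \<le> c + d"
      using h by auto
  qed
  have c4: "card S4 \<le> 60 * fact (k - 1)" unfolding S4_def by (rule card_S4[OF k])
  have fS: "finite S"
    unfolding S_def S1_def S2_def S3_def S4_def
    by (rule finite_subset[OF _ finite_perm]) (use Ev_perm in blast)
  have cS: "card S \<le> 7296 * fact (k - 1)"
  proof -
    have "card S \<le> card (S1 \<union> S2 \<union> S3) + card S4" unfolding S_def by (rule card_Un_le)
    moreover have "card (S1 \<union> S2 \<union> S3) \<le> card (S1 \<union> S2) + card S3" by (rule card_Un_le)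
    moreover have "card (S1 \<union> S2) \<le> card S1 + card S2" by (rule card_Un_le)
    ultimately have "card S \<le> card S1 + card S2 + card S3 + card S4" by linarith
    then show ?thesis using c1 c2 c3 c4 by linarith
  qed
  have incl: "Q \<in> S" if "class1 k Q \<or> class2 k Q \<or> class3 k Q \<or> class4 k Q" for Q
    using that
  proof (elim disjE)
    assume "class1 k Q" then show "Q \<in> S" using class1_ev unfolding S_def S1_def by blast
  next
    assume "class2 k Q" then show "Q \<in> S" using class2_ev unfolding S_def S2_def by blast
  next
    assume "class3 k Q" then show "Q \<in> S" using class3_ev unfolding S_def S3_def by blast
  next
    assume "class4 k Q" then show "Q \<in> S" using class4_ev unfolding S_def S4_def by blast
  qed
  have "card {P. perm_mat k P \<and> \<not> ordinary k P} \<le> 8 * card S"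
    by (rule card_bad_sym[OF fS incl])
  then show ?thesis using cS by linarith
qed

theorem lemma3:
  shows "(\<lambda>k. real (fact k) - real (card {P. ordinary k P})) \<in> o(\<lambda>k. real (fact k))"
proof (rule landau_o.smallI)
  fix c :: real assume c: "c > 0"
  define N where "N = max 4 (nat \<lceil>58368 / c\<rceil>)"
  have "\<forall>k\<ge>N. norm (real (fact k) - real (card {P. ordinary k P})) \<le> c * norm (real (fact k))"
  proof (intro allI impI)
    fix k assume kN: "N \<le> k"
    then have k: "4 \<le> k" unfolding N_def by simp
    let ?B = "{P. perm_mat k P \<and> \<not> ordinary k P}"
    have un: "{P. perm_mat k P} = {P. ordinary k P} \<union> ?B" unfolding ordinary_def by auto
    have fin1: "finite {P. ordinary k P}" by (rule finite_subset[OF _ finite_perm]) (auto simp: ordinary_def)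
    have fin2: "finite ?B" by (rule finite_subset[OF _ finite_perm]) auto
    note fin = fin1 fin2
    have "fact k = card {P. ordinary k P} + card ?B"
      using card_Un_disjoint[OF fin] un card_perm[of k] by auto
    then have e: "real (fact k) - real (card {P. ordinary k P}) = real (card ?B)"
      by (metis add_diff_cancel_left' of_nat_add of_nat_fact)
    have b: "real (card ?B) \<le> 58368 * real (fact (k - 1))"
      using card_bad[OF k] by (metis of_nat_fact of_nat_le_iff of_nat_mult of_nat_numeral)
    have fk: "real (fact k) = real k * real (fact (k - 1))"
    proof -
      have "k = Suc (k - 1)" using k by simp
      then have "fact k = (fact (Suc (k - 1)) :: real)" by simp
      also have "\<dots> = real k * fact (k - 1)" using k by (simp only: fact_Suc) simp
      finally show ?thesis by simp
    qed
    have "58368 / c \<le> real k"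
    proof -
      have "58368 / c \<le> real (nat \<lceil>58368 / c\<rceil>)" by linarith
      also have "\<dots> \<le> real k" using kN unfolding N_def by simp
      finally show ?thesis .
    qed
    then have "58368 \<le> c * real k" using c by (simp add: field_simps)
    then have m: "58368 * real (fact (k - 1)) \<le> c * (real k * real (fact (k - 1)))"
      unfolding mult.assoc[symmetric] by (rule mult_right_mono) simp_all
    have "real (card ?B) \<le> c * real (fact k)" unfolding fk using b m by linarith
    then show "norm (real (fact k) - real (card {P. ordinary k P})) \<le> c * norm (real (fact k))"
      using e by simp
  qed
  then show "eventually (\<lambda>k. norm (real (fact k) - real (card {P. ordinary k P})) \<le> c * norm (real (fact k))) at_top"
    using eventually_at_top_linorder by blast
qed

end
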